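(* Let $\Omega$ be a finite set with a metric $\rho$, and let $\mathrm D$ denote either the total variation distance or the earth mover's distance $\mathrm{EM}_\rho$ between probability distributions on $\Omega$. Let $t>0$, $B>0$ and $B^1,\dots,B^n>0$. Let $(P_p)_{p\in[B,(1+t)B]}$ and, for each $i$, $(Q^i_p)_{p\in[B^i,(1+t)B^i]}$ be measurable families of probability distributions on $\Omega$, and let $P$ (resp. $Q^i$) be the mixture obtained by drawing $p$ uniformly from $[B,(1+t)B]$ (resp. $[B^i,(1+t)B^i]$) and then sampling from $P_p$ (resp. $Q^i_p$). Suppose $M\ge 0$ satisfies $\mathrm D(P_p,Q^i_{q})\le M$ for all $i$, all $p\in[B,(1+t)B]$ and all $q\in[B^i,(1+t)B^i]$. Then \[\frac1n\sum_{i=1}^n \mathrm D(P,Q^i)\le \frac1{tB}\int_B^{(1+t)B}\Bigl(\frac1n\sum_{i=1}^n \mathrm D(P_p,Q^i_p)\Bigr)\,\mathrm dp+\frac Mn\cdot\frac{1+t}{t}\sum_{i=1}^n\Bigl|1-\frac{B^i}{B}\Bigr|,\] where $\mathrm D(P_p,Q^i_p)$ is interpreted as $0$ when $p\notin[B^i,(1+t)B^i]$.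
   Context: $\mathrm{EM}_\rho(\mathcal X_1,\mathcal X_2)=\min_{\mathcal D}\mathbb{E}_{(X_1,X_2)\sim\mathcal D}\rho(X_1,X_2)$ over couplings $\mathcal D$ with marginals $\mathcal X_1,\mathcal X_2$; the total variation distance is $\mathrm{TV}(\mathcal X_1,\mathcal X_2)=\max_{A\subseteq\Omega}|\mathcal X_1(A)-\mathcal X_2(A)|$. *)

theory Defs
  imports "HOL-Probability.Probability"
begin

text \<open>Distributions on the finite set Omega are pmfs on a finite type.\<close>

definition is_metric :: "('a \<Rightarrow> 'a \<Rightarrow> real) \<Rightarrow> bool" where
  "is_metric \<rho> \<longleftrightarrow> (\<forall>x y. 0 \<le> \<rho> x y) \<and> (\<forall>x y. \<rho> x y = 0 \<longleftrightarrow> x = y)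
     \<and> (\<forall>x y. \<rho> x y = \<rho> y x) \<and> (\<forall>x y z. \<rho> x z \<le> \<rho> x y + \<rho> y z)"

definition TV :: "'a::finite pmf \<Rightarrow> 'a pmf \<Rightarrow> real" where
  "TV P Q = Max ((\<lambda>A. \<bar>measure_pmf.prob P A - measure_pmf.prob Q A\<bar>) ` UNIV)"

definition couplings :: "'a pmf \<Rightarrow> 'b pmf \<Rightarrow> ('a \<times> 'b) pmf set" where
  "couplings P Q = {C. map_pmf fst C = P \<and> map_pmf snd C = Q}"

definition EM :: "('a::finite \<Rightarrow> 'a \<Rightarrow> real) \<Rightarrow> 'a pmf \<Rightarrow> 'a pmf \<Rightarrow> real" where
  "EM \<rho> P Q = (INF C \<in> couplings P Q. measure_pmf.expectation C (\<lambda>(x, y). \<rho> x y))"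

end

theory Submission
  imports Defs "HOL-Analysis.Analysis"
begin


lemma pmf_fst_sum:
  fixes C :: "('a::finite \<times> 'b::finite) pmf"
  shows "pmf (map_pmf fst C) x = (\<Sum>y\<in>UNIV. pmf C (x, y))"
proof -
  have e: "fst -` {x} = Pair x ` UNIV" by auto
  have "pmf (map_pmf fst C) x = sum (pmf C) (Pair x ` UNIV)"
    by (simp add: pmf_map measure_measure_pmf_finite e)
  also have "\<dots> = (\<Sum>y\<in>UNIV. pmf C (x, y))"
    by (subst sum.reindex) (auto simp: inj_on_def)
  finally show ?thesis .
qed

lemma pmf_snd_sum:
  fixes C :: "('a::finite \<times> 'b::finite) pmf"
  shows "pmf (map_pmf snd C) y = (\<Sum>x\<in>UNIV. pmf C (x, y))"
proof -
  have e: "snd -` {y} = (\<lambda>x. (x,y)) ` UNIV" by auto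
  have "pmf (map_pmf snd C) y = sum (pmf C) ((\<lambda>x. (x,y)) ` UNIV)"
    by (simp add: pmf_map measure_measure_pmf_finite e)
  also have "\<dots> = (\<Sum>x\<in>UNIV. pmf C (x, y))"
    by (subst sum.reindex) (auto simp: inj_on_def)
  finally show ?thesis .
qed

lemma expect_pair_sum:
  fixes C :: "('a::finite \<times> 'b::finite) pmf"
  shows "measure_pmf.expectation C (\<lambda>(x, y). r x y) = (\<Sum>x\<in>UNIV. \<Sum>y\<in>UNIV. pmf C (x,y) * r x y)"
proof -
  have "measure_pmf.expectation C (\<lambda>(x, y). r x y) = (\<Sum>a\<in>UNIV. pmf C a *\<^sub>R (\<lambda>(x, y). r x y) a)"
    by (rule integral_measure_pmf) auto
  also have "\<dots> = (\<Sum>(x,y)\<in>UNIV \<times> UNIV. pmf C (x,y) * r x y)"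
    by (simp add: case_prod_beta UNIV_Times_UNIV)
  also have "\<dots> = (\<Sum>x\<in>UNIV. \<Sum>y\<in>UNIV. pmf C (x,y) * r x y)"
    by (simp add: sum.cartesian_product)
  finally show ?thesis .
qed

definition Lf :: "('a::finite \<Rightarrow> real) \<Rightarrow> ('a \<Rightarrow> real) \<Rightarrow> 'a pmf \<Rightarrow> 'a pmf \<Rightarrow> real" where
  "Lf f g P Q = (\<Sum>x\<in>UNIV. f x * pmf P x) - (\<Sum>y\<in>UNIV. g y * pmf Q y)"

lemma coupling_L:
  fixes C :: "('a::finite \<times> 'a) pmf"
  assumes "C \<in> couplings P Q"
  shows "Lf f g P Q = (\<Sum>x\<in>UNIV. \<Sum>y\<in>UNIV. pmf C (x,y) * (f x - g y))"
proof -
  have P: "pmf P x = (\<Sum>y\<in>UNIV. pmf C (x, y))" for x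
    using assms pmf_fst_sum[of C x] by (auto simp: couplings_def)
  have Q: "pmf Q y = (\<Sum>x\<in>UNIV. pmf C (x, y))" for y
    using assms pmf_snd_sum[of C y] by (auto simp: couplings_def)
  have "(\<Sum>y\<in>UNIV. g y * pmf Q y) = (\<Sum>y\<in>UNIV. \<Sum>x\<in>UNIV. pmf C (x,y) * g y)"
    by (simp add: Q sum_distrib_left mult.commute)
  also have "\<dots> = (\<Sum>x\<in>UNIV. \<Sum>y\<in>UNIV. pmf C (x,y) * g y)"
    by (rule sum.swap)
  finally have gq: "(\<Sum>y\<in>UNIV. g y * pmf Q y) = (\<Sum>x\<in>UNIV. \<Sum>y\<in>UNIV. pmf C (x,y) * g y)" .
  have fp: "(\<Sum>x\<in>UNIV. f x * pmf P x) = (\<Sum>x\<in>UNIV. \<Sum>y\<in>UNIV. pmf C (x,y) * f x)"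
    by (simp add: P sum_distrib_left mult.commute)
  have "(\<Sum>x\<in>UNIV. \<Sum>y\<in>UNIV. pmf C (x,y) * (f x - g y))
     = (\<Sum>x\<in>UNIV. \<Sum>y\<in>UNIV. pmf C (x,y) * f x) - (\<Sum>x\<in>UNIV. \<Sum>y\<in>UNIV. pmf C (x,y) * g y)"
    by (simp add: right_diff_distrib sum_subtractf)
  then show ?thesis by (simp add: Lf_def fp gq)
qed

lemma couplings_ne: "pair_pmf P Q \<in> couplings P Q"
  by (simp add: couplings_def map_fst_pair_pmf map_snd_pair_pmf)

lemma EM_weak:
  fixes \<rho> :: "'a::finite \<Rightarrow> 'a \<Rightarrow> real"
  assumes "\<And>x y. f x - g y \<le> \<rho> x y"
  shows "Lf f g P Q \<le> EM \<rho> P Q"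
  unfolding EM_def
proof (rule cINF_greatest)
  show "couplings P Q \<noteq> {}" using couplings_ne by blast
  fix C assume C: "C \<in> couplings P Q"
  show "Lf f g P Q \<le> measure_pmf.expectation C (\<lambda>(x, y). \<rho> x y)"
    unfolding coupling_L[OF C] expect_pair_sum
    by (intro sum_mono mult_left_mono assms) auto
qed

lemma EM_bdd:
  fixes \<rho> :: "'a::finite \<Rightarrow> 'a \<Rightarrow> real"
  shows "bdd_below ((\<lambda>C. measure_pmf.expectation C (\<lambda>(x, y). \<rho> x y)) ` couplings P Q)"
proof -
  have "Lf (\<lambda>_. - (\<Sum>x\<in>UNIV. \<Sum>y\<in>UNIV. \<bar>\<rho> x y\<bar>)) (\<lambda>_. 0) P Q \<le> measure_pmf.expectation C (\<lambda>(x, y). \<rho> x y)"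
    if C: "C \<in> couplings P Q" for C
  proof -
    have b: "- (\<Sum>x\<in>UNIV. \<Sum>y\<in>UNIV. \<bar>\<rho> x y\<bar>) \<le> \<rho> a b" for a b
    proof -
      have "\<bar>\<rho> a b\<bar> \<le> (\<Sum>y\<in>UNIV. \<bar>\<rho> a y\<bar>)" by (rule member_le_sum) auto
      also have "\<dots> \<le> (\<Sum>x\<in>UNIV. \<Sum>y\<in>UNIV. \<bar>\<rho> x y\<bar>)"
        by (rule member_le_sum[where f="\<lambda>x. \<Sum>y\<in>UNIV. \<bar>\<rho> x y\<bar>"]) (auto intro: sum_nonneg)
      finally show ?thesis by linarith
    qed
    show ?thesis
      unfolding coupling_L[OF C] expect_pair_sum
      by (intro sum_mono mult_left_mono) (use b in auto)
  qed
  then show ?thesis by (rule bdd_belowI2)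
qed



definition gen :: "('a::finite \<Rightarrow> 'a \<Rightarrow> real) \<Rightarrow> 'a \<Rightarrow> 'a \<Rightarrow> (real^'a) \<times> (real^'a) \<times> real" where
  "gen \<rho> x y = (axis x 1, axis y 1, \<rho> x y)"

definition Kc :: "('a::finite \<Rightarrow> 'a \<Rightarrow> real) \<Rightarrow> ((real^'a) \<times> (real^'a) \<times> real) set" where
  "Kc \<rho> = {z. \<exists>\<mu> r. (\<forall>x y. 0 \<le> \<mu> x y) \<and> 0 \<le> r \<and>
              z = (\<Sum>x\<in>UNIV. \<Sum>y\<in>UNIV. \<mu> x y *\<^sub>R gen \<rho> x y) + r *\<^sub>R (0,0,1)}"

lemma z3[simp]: "((0,0,0)::(real^'a::finite)\<times>(real^'a)\<times>real) = 0"
  by (simp add: zero_prod_def)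

lemma Kc_convex_cone: "convex_cone (Kc \<rho>)"
  unfolding convex_cone_iff
proof (intro conjI ballI allI impI)
  show "0 \<in> Kc \<rho>" unfolding Kc_def
    by (rule CollectI, rule exI[of _ "\<lambda>_ _. 0"], rule exI[of _ 0]) simp
next
  fix a b assume "a \<in> Kc \<rho>" "b \<in> Kc \<rho>"
  then obtain \<mu>1 r1 \<mu>2 r2 where h: "\<forall>x y. 0 \<le> \<mu>1 x y" "0 \<le> r1" "a = (\<Sum>x\<in>UNIV. \<Sum>y\<in>UNIV. \<mu>1 x y *\<^sub>R gen \<rho> x y) + r1 *\<^sub>R (0,0,1)"
     "\<forall>x y. 0 \<le> \<mu>2 x y" "0 \<le> r2" "b = (\<Sum>x\<in>UNIV. \<Sum>y\<in>UNIV. \<mu>2 x y *\<^sub>R gen \<rho> x y) + r2 *\<^sub>R (0,0,1)"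
    unfolding Kc_def by blast
  show "a + b \<in> Kc \<rho>" unfolding Kc_def
    apply (rule CollectI, rule exI[of _ "\<lambda>x y. \<mu>1 x y + \<mu>2 x y"], rule exI[of _ "r1 + r2"])
    using h by (simp add: scaleR_add_left sum.distrib add_ac add_nonneg_nonneg)
next
  fix a and c :: real assume "a \<in> Kc \<rho>" "0 \<le> c"
  then obtain \<mu>1 r1 where h: "\<forall>x y. 0 \<le> \<mu>1 x y" "0 \<le> r1" "a = (\<Sum>x\<in>UNIV. \<Sum>y\<in>UNIV. \<mu>1 x y *\<^sub>R gen \<rho> x y) + r1 *\<^sub>R (0,0,1)"
    unfolding Kc_def by blast
  show "c *\<^sub>R a \<in> Kc \<rho>" unfolding Kc_def
    apply (rule CollectI, rule exI[of _ "\<lambda>x y. c * \<mu>1 x y"], rule exI[of _ "c * r1"])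
    using h \<open>0 \<le> c\<close> by (simp add: scaleR_add_right scaleR_sum_right)
qed

lemma gen_in_Kc: "gen \<rho> x y \<in> Kc \<rho>"
  unfolding Kc_def
  apply (rule CollectI)
proof (intro exI conjI)
  have "(\<Sum>a\<in>UNIV. \<Sum>b\<in>UNIV. (if a = x \<and> b = y then 1 else 0) *\<^sub>R gen \<rho> a b)
      = (\<Sum>a\<in>UNIV. if a = x then gen \<rho> a y else 0)"
  proof (rule sum.cong[OF refl])
    fix a
    have "(\<Sum>b\<in>UNIV. (if a = x \<and> b = y then 1 else 0) *\<^sub>R gen \<rho> a b)
       = (\<Sum>b\<in>UNIV. if b = y then (if a = x then gen \<rho> a b else 0) else 0)"
      by (rule sum.cong) auto
    also have "\<dots> = (if a = x then gen \<rho> a y else 0)" by (simp add: sum.delta)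
    finally show "(\<Sum>b\<in>UNIV. (if a = x \<and> b = y then 1 else 0) *\<^sub>R gen \<rho> a b) = (if a = x then gen \<rho> a y else 0)" .
  qed
  also have "\<dots> = gen \<rho> x y" by (simp add: sum.delta)
  finally show "gen \<rho> x y = (\<Sum>a\<in>UNIV. \<Sum>b\<in>UNIV. (if a = x \<and> b = y then 1 else 0) *\<^sub>R gen \<rho> a b) + (0::real) *\<^sub>R (0,0,1)"
    by simp
qed auto

lemma e0_in_Kc: "(0,0,1) \<in> Kc \<rho>"
  unfolding Kc_def
  by (rule CollectI, rule exI[of _ "\<lambda>_ _. 0"], rule exI[of _ 1]) simp

lemma hull_sub_Kc: "convex_cone hull (range (\<lambda>(x,y). gen \<rho> x y) \<union> {(0,0,1)}) \<subseteq> Kc \<rho>"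
  by (rule hull_minimal) (auto simp: gen_in_Kc e0_in_Kc Kc_convex_cone)



lemma Kc_coupling:
  fixes \<rho> :: "'a::finite \<Rightarrow> 'a \<Rightarrow> real"
  assumes "((\<chi> x. pmf P x), (\<chi> y. pmf Q y), e) \<in> Kc \<rho>"
  shows "EM \<rho> P Q \<le> e"
proof -
  obtain \<mu> r where h: "\<forall>x y. 0 \<le> \<mu> x y" "0 \<le> r"
    "((\<chi> x. pmf P x), (\<chi> y. pmf Q y), e) = (\<Sum>x\<in>UNIV. \<Sum>y\<in>UNIV. \<mu> x y *\<^sub>R gen \<rho> x y) + r *\<^sub>R (0,0,1)"
    using assms unfolding Kc_def by blast
  have c1: "(\<chi> x. pmf P x) = (\<Sum>x\<in>UNIV. \<Sum>y\<in>UNIV. \<mu> x y *\<^sub>R axis x 1)"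
    using arg_cong[OF h(3), of fst] by (simp add: fst_sum gen_def)
  have c2: "(\<chi> y. pmf Q y) = (\<Sum>x\<in>UNIV. \<Sum>y\<in>UNIV. \<mu> x y *\<^sub>R axis y 1)"
    using arg_cong[OF h(3), of "fst \<circ> snd"] by (simp add: fst_sum snd_sum gen_def)
  have c3: "e = (\<Sum>x\<in>UNIV. \<Sum>y\<in>UNIV. \<mu> x y * \<rho> x y) + r"
    using arg_cong[OF h(3), of "snd \<circ> snd"] by (simp add: snd_sum gen_def)
  have mP: "pmf P x = (\<Sum>y\<in>UNIV. \<mu> x y)" for x
  proof -
    have "pmf P x = (\<Sum>x'\<in>UNIV. \<Sum>y\<in>UNIV. \<mu> x' y *\<^sub>R axis x' 1) $ x"
      using c1 by (metis vec_lambda_beta)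
    also have "\<dots> = (\<Sum>x'\<in>UNIV. \<Sum>y\<in>UNIV. if x' = x then \<mu> x' y else 0)"
      by (auto simp: sum_component axis_def intro!: sum.cong)
    also have "\<dots> = (\<Sum>x'\<in>UNIV. if x' = x then (\<Sum>y\<in>UNIV. \<mu> x' y) else 0)"
      by (rule sum.cong) auto
    also have "\<dots> = (\<Sum>y\<in>UNIV. \<mu> x y)" by simp
    finally show ?thesis .
  qed
  have mQ: "pmf Q y = (\<Sum>x\<in>UNIV. \<mu> x y)" for y
  proof -
    have "pmf Q y = (\<Sum>x\<in>UNIV. \<Sum>y'\<in>UNIV. \<mu> x y' *\<^sub>R axis y' 1) $ y"
      using c2 by (metis vec_lambda_beta)
    also have "\<dots> = (\<Sum>x\<in>UNIV. \<mu> x y)"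
      by (simp add: sum_component axis_def if_distrib[where f="\<lambda>z. _ * z"] cong: if_cong)
    finally show ?thesis .
  qed
  define m where "m = (\<lambda>(x,y). \<mu> x y)"
  have m0: "0 \<le> m p" for p using h(1) by (auto simp: m_def split: prod.splits)
  have "(\<Sum>p\<in>UNIV. m p) = (\<Sum>x\<in>UNIV. \<Sum>y\<in>UNIV. \<mu> x y)"
    by (simp add: m_def UNIV_Times_UNIV[symmetric] sum.cartesian_product del: UNIV_Times_UNIV)
  also have "\<dots> = (\<Sum>x\<in>UNIV. pmf P x)" by (simp add: mP)
  also have "\<dots> = 1" by (rule sum_pmf_eq_1) auto
  finally have m1: "(\<Sum>p\<in>UNIV. m p) = 1" .
  have "(\<integral>\<^sup>+ p. ennreal (m p) \<partial>count_space UNIV) = (\<Sum>p\<in>UNIV. ennreal (m p))"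
    by (simp add: nn_integral_count_space_finite)
  also have "\<dots> = ennreal (\<Sum>p\<in>UNIV. m p)" using m0 by (simp add: sum_ennreal)
  finally have mi: "(\<integral>\<^sup>+ p. ennreal (m p) \<partial>count_space UNIV) = 1" using m1 by simp
  define C where "C = embed_pmf m"
  have pC: "pmf C (x,y) = \<mu> x y" for x y
    unfolding C_def by (subst pmf_embed_pmf[OF m0 mi]) (simp add: m_def)
  have Ccoup: "C \<in> couplings P Q"
    unfolding couplings_def
    by (auto intro!: pmf_eqI simp: pmf_fst_sum pmf_snd_sum pC mP mQ)
  have "EM \<rho> P Q \<le> measure_pmf.expectation C (\<lambda>(x, y). \<rho> x y)"
    unfolding EM_def by (rule cINF_lower[OF EM_bdd Ccoup])
  also have "\<dots> = (\<Sum>x\<in>UNIV. \<Sum>y\<in>UNIV. \<mu> x y * \<rho> x y)"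
    by (simp add: expect_pair_sum pC)
  also have "\<dots> \<le> e" using c3 h(2) by simp
  finally show ?thesis .
qed



lemma EM_dual:
  fixes \<rho> :: "'a::finite \<Rightarrow> 'a \<Rightarrow> real"
  assumes eps: "\<epsilon> > 0"
  shows "\<exists>f g. (\<forall>x y. f x - g y \<le> \<rho> x y) \<and> EM \<rho> P Q - \<epsilon> < Lf f g P Q"
proof -
  define G where "G = range (\<lambda>(x,y). gen \<rho> x y) \<union> {(0,0,1)}"
  define H where "H = convex_cone hull G"
  define z where "z = ((\<chi> x. pmf P x), (\<chi> y. pmf Q y), EM \<rho> P Q - \<epsilon>)"
  have zH: "z \<notin> H"
  proof
    assume "z \<in> H"
    then have "z \<in> Kc \<rho>" using hull_sub_Kc unfolding H_def G_def by blast
    then have "EM \<rho> P Q \<le> EM \<rho> P Q - \<epsilon>" unfolding z_def by (rule Kc_coupling)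
    then show False using eps by simp
  qed
  have fin: "finite G" unfolding G_def by simp
  obtain a b where ab: "inner a z < b" "\<forall>x\<in>H. b < inner a x"
    using separating_hyperplane_closed_point[OF convex_convex_cone_hull closed_convex_cone_hull[OF fin] zH[unfolded H_def]]
    unfolding H_def by blast
  have b0: "b < 0" using ab(2) convex_cone_hull_contains_0[of G] unfolding H_def by force
  have pos: "inner a k \<ge> 0" if k: "k \<in> H" for k
  proof (rule ccontr)
    assume "\<not> inner a k \<ge> 0"
    then have neg: "inner a k < 0" by simp
    define c where "c = b / inner a k"
    have c0: "c \<ge> 0" unfolding c_def using neg b0 by (simp add: divide_nonpos_neg)
    have "c *\<^sub>R k \<in> H" unfolding H_def
      by (rule conicD[OF conic_convex_cone_hull]) (use k c0 H_def in auto)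
    then have "b < inner a (c *\<^sub>R k)" using ab(2) by blast
    also have "inner a (c *\<^sub>R k) = b" unfolding c_def using neg by simp
    finally show False by simp
  qed
  obtain u v s where a: "a = (u, v, s)" by (cases a) auto
  have gH: "gen \<rho> x y \<in> H" for x y unfolding H_def G_def
    by (rule hull_inc) auto
  have eH: "(0,0,1) \<in> H" unfolding H_def G_def by (rule hull_inc) auto
  have gpos: "u $ x + v $ y + s * \<rho> x y \<ge> 0" for x y
    using pos[OF gH[of x y]] by (simp add: a gen_def inner_Pair inner_axis)
  have s0: "s \<ge> 0" using pos[OF eH] by (simp add: a inner_Pair)
  have az: "inner a z = Lf (\<lambda>x. u $ x) (\<lambda>y. - v $ y) P Q + s * (EM \<rho> P Q - \<epsilon>)"
    by (simp add: a z_def inner_Pair inner_vec_def Lf_def sum_negf)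
  define C where "C = pair_pmf P Q"
  have C: "C \<in> couplings P Q" unfolding C_def by (rule couplings_ne)
  have costC: "EM \<rho> P Q \<le> measure_pmf.expectation C (\<lambda>(x, y). \<rho> x y)"
    unfolding EM_def by (rule cINF_lower[OF EM_bdd C])
  have "0 \<le> (\<Sum>x\<in>UNIV. \<Sum>y\<in>UNIV. pmf C (x,y) * (u $ x + v $ y + s * \<rho> x y))"
    by (intro sum_nonneg mult_nonneg_nonneg gpos) auto
  also have "\<dots> = (\<Sum>x\<in>UNIV. \<Sum>y\<in>UNIV. pmf C (x,y) * (u $ x - - v $ y)) + s * (\<Sum>x\<in>UNIV. \<Sum>y\<in>UNIV. pmf C (x,y) * \<rho> x y)"
    by (simp add: sum_distrib_left algebra_simps sum.distrib)
  also have "\<dots> = Lf (\<lambda>x. u $ x) (\<lambda>y. - v $ y) P Q + s * measure_pmf.expectation C (\<lambda>(x, y). \<rho> x y)"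
    by (simp add: coupling_L[OF C] expect_pair_sum)
  finally have cpos: "0 \<le> Lf (\<lambda>x. u $ x) (\<lambda>y. - v $ y) P Q + s * measure_pmf.expectation C (\<lambda>(x, y). \<rho> x y)" .
  have lt: "Lf (\<lambda>x. u $ x) (\<lambda>y. - v $ y) P Q + s * (EM \<rho> P Q - \<epsilon>) < 0"
    using ab(1) b0 az by simp
  have "s * (EM \<rho> P Q - \<epsilon>) < s * measure_pmf.expectation C (\<lambda>(x, y). \<rho> x y)"
    using lt cpos by simp
  then have sp: "s > 0" using s0 by (cases "s = 0") auto
  define f where "f = (\<lambda>x. - u $ x / s)"
  define g where "g = (\<lambda>y. v $ y / s)"
  have feas: "f x - g y \<le> \<rho> x y" for x y
  proof -
    have "f x - g y = - (u $ x + v $ y) / s" unfolding f_def g_def using sp by (simp add: field_simps)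
    also have "\<dots> \<le> \<rho> x y" using gpos[of x y] sp by (simp add: divide_le_eq mult.commute)
    finally show ?thesis .
  qed
  have Lfg: "Lf f g P Q = - Lf (\<lambda>x. u $ x) (\<lambda>y. - v $ y) P Q / s"
    unfolding Lf_def f_def g_def
    using sp by (simp add: sum_divide_distrib[symmetric] sum_negf field_simps)
  have "(EM \<rho> P Q - \<epsilon>) * s < - Lf (\<lambda>x. u $ x) (\<lambda>y. - v $ y) P Q"
    using lt by (simp add: mult.commute)
  then have "EM \<rho> P Q - \<epsilon> < Lf f g P Q"
    unfolding Lfg using sp by (simp only: minus_divide_left pos_less_divide_eq)
  then show ?thesis using feas by blast
qed



definition goodF :: "(('a::finite \<Rightarrow> real) \<times> ('a \<Rightarrow> real)) set \<Rightarrow> ('a pmf \<Rightarrow> 'a pmf \<Rightarrow> real) \<Rightarrow> bool" where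
  "goodF F D \<longleftrightarrow> countable F \<and> ((\<lambda>_. 0), (\<lambda>_. 0)) \<in> F \<and>
     (\<forall>P Q. \<forall>p\<in>F. Lf (fst p) (snd p) P Q \<le> D P Q) \<and>
     (\<forall>P Q \<epsilon>. \<epsilon> > 0 \<longrightarrow> (\<exists>p\<in>F. D P Q - \<epsilon> < Lf (fst p) (snd p) P Q))"

lemma countable_rat_pairs:
  "countable {p :: ('a::finite \<Rightarrow> real) \<times> ('a \<Rightarrow> real). (\<forall>x. fst p x \<in> \<rat>) \<and> (\<forall>y. snd p y \<in> \<rat>)}"
proof (rule countable_subset)
  show "countable ((\<lambda>(r1, r2). (\<lambda>x. of_rat (r1 x) :: real, \<lambda>y. of_rat (r2 y) :: real)) ` (UNIV :: (('a \<Rightarrow> rat) \<times> ('a \<Rightarrow> rat)) set))"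
    by (rule countable_image) simp
  show "{p :: ('a::finite \<Rightarrow> real) \<times> ('a \<Rightarrow> real). (\<forall>x. fst p x \<in> \<rat>) \<and> (\<forall>y. snd p y \<in> \<rat>)}
     \<subseteq> (\<lambda>(r1, r2). (\<lambda>x. of_rat (r1 x) :: real, \<lambda>y. of_rat (r2 y) :: real)) ` UNIV"
  proof
    fix p :: "('a \<Rightarrow> real) \<times> ('a \<Rightarrow> real)"
    assume "p \<in> {p. (\<forall>x. fst p x \<in> \<rat>) \<and> (\<forall>y. snd p y \<in> \<rat>)}"
    then have h: "\<forall>x. fst p x \<in> range of_rat" "\<forall>y. snd p y \<in> range of_rat" by (auto simp: Rats_def)
    have "p = (\<lambda>(r1, r2). (\<lambda>x. of_rat (r1 x) :: real, \<lambda>y. of_rat (r2 y) :: real))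
             ((\<lambda>x. inv of_rat (fst p x)), (\<lambda>y. inv of_rat (snd p y)))"
      using h by (auto simp: f_inv_into_f prod_eq_iff)
    then show "p \<in> (\<lambda>(r1, r2). (\<lambda>x. of_rat (r1 x) :: real, \<lambda>y. of_rat (r2 y) :: real)) ` UNIV"
      by blast
  qed
qed

lemma Lf_shift:
  fixes f f' g g' :: "'a::finite \<Rightarrow> real"
  assumes "\<And>x. f x - d \<le> f' x" "\<And>y. g' y \<le> g y + d"
  shows "Lf f g P Q - 2 * d \<le> Lf f' g' P Q"
proof -
  have "(\<Sum>x\<in>UNIV. f x * pmf P x) - d = (\<Sum>x\<in>UNIV. (f x - d) * pmf P x)"
    by (simp add: left_diff_distrib sum_subtractf sum_distrib_left[symmetric] sum_pmf_eq_1)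
  also have "\<dots> \<le> (\<Sum>x\<in>UNIV. f' x * pmf P x)"
    by (intro sum_mono mult_right_mono assms) auto
  finally have 1: "(\<Sum>x\<in>UNIV. f x * pmf P x) - d \<le> (\<Sum>x\<in>UNIV. f' x * pmf P x)" .
  have "(\<Sum>y\<in>UNIV. g' y * pmf Q y) \<le> (\<Sum>y\<in>UNIV. (g y + d) * pmf Q y)"
    by (intro sum_mono mult_right_mono assms) auto
  also have "\<dots> = (\<Sum>y\<in>UNIV. g y * pmf Q y) + d"
    by (simp add: distrib_right sum.distrib sum_distrib_left[symmetric] sum_pmf_eq_1)
  finally have 2: "(\<Sum>y\<in>UNIV. g' y * pmf Q y) \<le> (\<Sum>y\<in>UNIV. g y * pmf Q y) + d" .
  show ?thesis using 1 2 unfolding Lf_def by linarith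
qed

lemma goodF_EM:
  fixes \<rho> :: "'a::finite \<Rightarrow> 'a \<Rightarrow> real"
  assumes nn: "\<And>x y. 0 \<le> \<rho> x y"
  shows "goodF {p. (\<forall>x y. fst p x - snd p y \<le> \<rho> x y) \<and> (\<forall>x. fst p x \<in> \<rat>) \<and> (\<forall>y. snd p y \<in> \<rat>)} (EM \<rho>)"
  unfolding goodF_def
proof (intro conjI allI impI ballI)
  show "countable {p. (\<forall>x y. fst p x - snd p y \<le> \<rho> x y) \<and> (\<forall>x. fst p x \<in> \<rat>) \<and> (\<forall>y. snd p y \<in> \<rat>)}"
    by (rule countable_subset[OF _ countable_rat_pairs]) auto
  show "((\<lambda>_. 0), (\<lambda>_. 0)) \<in> {p. (\<forall>x y. fst p x - snd p y \<le> \<rho> x y) \<and> (\<forall>x. fst p x \<in> \<rat>) \<and> (\<forall>y. snd p y \<in> \<rat>)}"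
    using nn by auto
next
  fix P Q p assume "p \<in> {p. (\<forall>x y. fst p x - snd p y \<le> \<rho> x y) \<and> (\<forall>x. fst p x \<in> \<rat>) \<and> (\<forall>y. snd p y \<in> \<rat>)}"
  then show "Lf (fst p) (snd p) P Q \<le> EM \<rho> P Q" by (intro EM_weak) auto
next
  fix P Q and \<epsilon> :: real assume eps: "\<epsilon> > 0"
  obtain f g where fg: "\<forall>x y. f x - g y \<le> \<rho> x y" "EM \<rho> P Q - \<epsilon>/2 < Lf f g P Q"
    using EM_dual[of "\<epsilon>/2" \<rho> P Q] eps by auto
  define d where "d = \<epsilon>/4"
  have d0: "d > 0" using eps by (simp add: d_def)
  have "\<forall>x. \<exists>q. q \<in> \<rat> \<and> f x - d < q \<and> q < f x"
  proof
    fix x show "\<exists>q. q \<in> \<rat> \<and> f x - d < q \<and> q < f x"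
      using Rats_dense_in_real[of "f x - d" "f x"] d0 by auto
  qed
  then obtain f' where f': "\<And>x. f' x \<in> \<rat> \<and> f x - d < f' x \<and> f' x < f x" by metis
  have "\<forall>y. \<exists>q. q \<in> \<rat> \<and> g y < q \<and> q < g y + d"
  proof
    fix y show "\<exists>q. q \<in> \<rat> \<and> g y < q \<and> q < g y + d"
      using Rats_dense_in_real[of "g y" "g y + d"] d0 by auto
  qed
  then obtain g' where g': "\<And>y. g' y \<in> \<rat> \<and> g y < g' y \<and> g' y < g y + d" by metis
  have feas: "f' x - g' y \<le> \<rho> x y" for x y
    using f'[of x] g'[of y] fg(1) by (smt (verit))
  have "Lf f g P Q - 2 * d \<le> Lf f' g' P Q"
    by (rule Lf_shift) (use f' g' in \<open>auto intro: less_imp_le\<close>)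
  then have "EM \<rho> P Q - \<epsilon> < Lf f' g' P Q" using fg(2) by (simp add: d_def)
  then show "\<exists>p\<in>{p. (\<forall>x y. fst p x - snd p y \<le> \<rho> x y) \<and> (\<forall>x. fst p x \<in> \<rat>) \<and> (\<forall>y. snd p y \<in> \<rat>)}.
          EM \<rho> P Q - \<epsilon> < Lf (fst p) (snd p) P Q"
    using feas f' g' by (intro bexI[of _ "(f', g')"]) auto
qed

lemma Lf_ind: "Lf (indicator A) (indicator A) P Q = measure_pmf.prob P A - measure_pmf.prob Q A"
proof -
  have "(\<Sum>x\<in>UNIV. indicator A x * pmf P x) = measure_pmf.prob P A" for P :: "'a::finite pmf"
    by (simp add: measure_measure_pmf_finite indicator_def sum.If_cases Int_absorb1)
  then show ?thesis by (simp add: Lf_def)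
qed

lemma goodF_TV:
  "goodF ((\<lambda>A. (indicator A :: 'a \<Rightarrow> real, indicator A :: 'a \<Rightarrow> real)) ` (UNIV :: 'a::finite set set)) TV"
  unfolding goodF_def
proof (intro conjI allI impI ballI)
  show "countable ((\<lambda>A. (indicator A :: 'a \<Rightarrow> real, indicator A :: 'a \<Rightarrow> real)) ` (UNIV :: 'a::finite set set))" by simp
  show "((\<lambda>_. 0), (\<lambda>_. 0)) \<in> ((\<lambda>A. (indicator A :: 'a \<Rightarrow> real, indicator A :: 'a \<Rightarrow> real)) ` (UNIV :: 'a::finite set set))"
    by (rule image_eqI[of _ _ "{}"]) auto
next
  fix P Q :: "'a pmf" and p assume "p \<in> ((\<lambda>A. (indicator A :: 'a \<Rightarrow> real, indicator A :: 'a \<Rightarrow> real)) ` (UNIV :: 'a::finite set set))"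
  then obtain A where p: "p = (indicator A, indicator A)" by auto
  have "\<bar>measure_pmf.prob P A - measure_pmf.prob Q A\<bar> \<le> TV P Q"
    unfolding TV_def by (rule Max_ge) auto
  then show "Lf (fst p) (snd p) P Q \<le> TV P Q" by (simp add: p Lf_ind)
next
  fix P Q :: "'a pmf" and \<epsilon> :: real assume eps: "\<epsilon> > 0"
  have "TV P Q \<in> ((\<lambda>A. \<bar>measure_pmf.prob P A - measure_pmf.prob Q A\<bar>) ` UNIV)"
    unfolding TV_def by (rule Max_in) auto
  then obtain A where A: "TV P Q = \<bar>measure_pmf.prob P A - measure_pmf.prob Q A\<bar>" by auto
  show "\<exists>p\<in>(\<lambda>A. (indicator A :: 'a \<Rightarrow> real, indicator A :: 'a \<Rightarrow> real)) ` UNIV. TV P Q - \<epsilon> < Lf (fst p) (snd p) P Q"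
  proof (cases "measure_pmf.prob Q A \<le> measure_pmf.prob P A")
    case True
    then show ?thesis using eps A by (intro bexI[of _ "(indicator A, indicator A)"]) (auto simp: Lf_ind)
  next
    case False
    have "measure_pmf.prob P (- A) = 1 - measure_pmf.prob P A"
         "measure_pmf.prob Q (- A) = 1 - measure_pmf.prob Q A"
      using measure_pmf.prob_compl[of A P] measure_pmf.prob_compl[of A Q]
      by (auto simp: Compl_eq_Diff_UNIV)
    then show ?thesis using eps A False
      by (intro bexI[of _ "(indicator (- A), indicator (- A))"]) (auto simp: Lf_ind)
  qed
qed



lemma int_Icc: "l \<le> u \<Longrightarrow> integral\<^sup>L lborel (indicator {l..u} :: real \<Rightarrow> real) = u - l"
  by (simp add: measure_lborel_Icc)
lemma int_Ioc: "l \<le> u \<Longrightarrow> integral\<^sup>L lborel (indicator {l<..u} :: real \<Rightarrow> real) = u - l"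
  by (simp add: measure_lborel_Ioc)
lemma intg_Icc: "integrable lborel (indicator {l..u} :: real \<Rightarrow> real)"
  by (rule integrable_real_indicator) (auto simp: emeasure_lborel_Icc_eq)
lemma intg_Ioc: "integrable lborel (indicator {l<..u} :: real \<Rightarrow> real)"
proof (rule integrable_real_indicator)
  show "emeasure lborel {l<..u} < \<infinity>"
    by (cases "l \<le> u") (auto simp: emeasure_lborel_Ioc)
qed auto

lemma core:
  fixes a b h :: "real \<Rightarrow> real" and t B B' M :: real
  assumes t: "t > 0" and B: "B > 0" and B': "B' > 0" and M: "M \<ge> 0"
    and ia: "integrable lborel (\<lambda>p. indicator {B..(1+t)*B} p * a p)"
    and ib: "integrable lborel (\<lambda>p. indicator {B'..(1+t)*B'} p * b p)"
    and ih: "integrable lborel (\<lambda>p. indicator {B..(1+t)*B} p * h p)"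
    and abM: "\<And>p q. p \<in> {B..(1+t)*B} \<Longrightarrow> q \<in> {B'..(1+t)*B'} \<Longrightarrow> a p - b q \<le> M"
    and abh: "\<And>p. p \<in> {B..(1+t)*B} \<Longrightarrow> p \<in> {B'..(1+t)*B'} \<Longrightarrow> a p - b p \<le> h p"
    and h0: "\<And>p. 0 \<le> h p"
  shows "(1/(t*B)) * integral\<^sup>L lborel (\<lambda>p. indicator {B..(1+t)*B} p * a p)
       - (1/(t*B')) * integral\<^sup>L lborel (\<lambda>p. indicator {B'..(1+t)*B'} p * b p)
     \<le> (1/(t*B)) * integral\<^sup>L lborel (\<lambda>p. indicator {B..(1+t)*B} p * h p)
       + M * ((1+t)/t) * \<bar>1 - B'/B\<bar>"
proof -
  define I where "I = {B..(1+t)*B}"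
  define J where "J = {B'..(1+t)*B'}"
  define c1 where "c1 = 1/(t*B)"
  define c2 where "c2 = 1/(t*B')"
  have c1p: "c1 > 0" and c2p: "c2 > 0" using t B B' by (auto simp: c1_def c2_def)
  have BI: "B \<in> I" and BJ: "B' \<in> J" using t B B' by (auto simp: I_def J_def)
  have bdd: "bdd_above (a ` I)"
  proof (rule bdd_aboveI2)
    fix p assume "p \<in> I"
    then show "a p \<le> b B' + M" using abM[of p B'] BJ unfolding I_def J_def by auto
  qed
  define c where "c = Sup (a ` I) - M"
  have haI: "a p \<le> c + M" if "p \<in> I" for p
    unfolding c_def using cSup_upper[OF imageI[OF that] bdd] by simp
  have hbJ: "c \<le> b q" if "q \<in> J" for q
  proof -
    have "Sup (a ` I) \<le> b q + M"
      using BI abM that unfolding I_def J_def by (intro cSup_least) (auto, smt (verit))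
    then show ?thesis unfolding c_def by simp
  qed
  have iI: "integral\<^sup>L lborel (indicator I :: real \<Rightarrow> real) = t * B"
    unfolding I_def using t B by (subst int_Icc) (auto simp: algebra_simps)
  have iJ: "integral\<^sup>L lborel (indicator J :: real \<Rightarrow> real) = t * B'"
    unfolding J_def using t B' by (subst int_Icc) (auto simp: algebra_simps)
  have mI: "measure lborel I = t * B" using iI by simp
  have mJ: "measure lborel J = t * B'" using iJ by simp
  have c1I: "c1 * (t * B) = 1" and c2J: "c2 * (t*B') = 1" using t B B' by (auto simp: c1_def c2_def)
  note ia' = ia[folded I_def] and ib' = ib[folded J_def] and ih' = ih[folded I_def]
  have gI: "integrable lborel (indicator I :: real \<Rightarrow> real)" unfolding I_def by (rule intg_Icc)
  have gJ: "integrable lborel (indicator J :: real \<Rightarrow> real)" unfolding J_def by (rule intg_Icc)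
  define LHS where "LHS = (\<lambda>p. c1 * (indicator I p * a p) - c2 * (indicator J p * b p))"
  have iLHS: "integral\<^sup>L lborel LHS = c1 * integral\<^sup>L lborel (\<lambda>p. indicator I p * a p)
       - c2 * integral\<^sup>L lborel (\<lambda>p. indicator J p * b p)"
    unfolding LHS_def using ia' ib' by (simp add: integral_mult_right_zero)
  show ?thesis
  proof (cases "B \<le> B'")
    case True
    define K where "K = {(1+t)*B<..(1+t)*B'}"
    define RHS where "RHS = (\<lambda>p. c1 * (indicator I p * h p) + c2 * M * indicator K p
          + (c + M) * (c1 * indicator I p - c2 * indicator J p))"
    have gK: "integrable lborel (indicator K :: real \<Rightarrow> real)" unfolding K_def by (rule intg_Ioc)
    have iK: "integral\<^sup>L lborel (indicator K :: real \<Rightarrow> real) = (1+t)*(B'-B)"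
    proof -
      have "(1+t)*B \<le> (1+t)*B'" using True t by (intro mult_left_mono) auto
      then show ?thesis unfolding K_def by (simp add: int_Ioc algebra_simps)
    qed
    then have mK: "measure lborel K = (1+t)*(B'-B)" by simp
    have pw: "LHS p \<le> RHS p" for p
    proof -
      consider "p \<in> I" "p \<in> J" | "p \<in> I" "p \<notin> J" | "p \<notin> I" "p \<in> J" | "p \<notin> I" "p \<notin> J" by blast
      then show ?thesis
      proof cases
        case 1
        have pK: "p \<notin> K" using 1 unfolding K_def I_def by auto
        have "c1 * (a p - c - M) \<le> c2 * (a p - c - M)"
          using haI[OF 1(1)] True B B' t unfolding c1_def c2_def
          by (intro mult_right_mono_neg) (auto simp: frac_le)
        moreover have "c2 * (a p - b p) \<le> c2 * h p"
          using abh 1 c2p unfolding I_def J_def by (intro mult_left_mono) auto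
        moreover have "c2 * h p \<le> c1 * h p"
          using h0[of p] True B B' t unfolding c1_def c2_def
          by (intro mult_right_mono) (auto simp: frac_le)
        ultimately show ?thesis using 1 pK unfolding LHS_def RHS_def
          by (simp add: algebra_simps)
      next
        case 2
        have "c1 * a p \<le> c1 * (c + M)" using haI[OF 2(1)] c1p by (intro mult_left_mono) auto
        moreover have "0 \<le> c2 * M * indicator K p" using c2p M by simp
        moreover have "0 \<le> c1 * h p" using c1p h0[of p] by simp
        ultimately show ?thesis using 2 unfolding LHS_def RHS_def by (simp add: algebra_simps)
      next
        case 3
        have pK: "p \<in> K" using 3 True t B unfolding K_def I_def J_def by auto
        have "c2 * c \<le> c2 * b p" using hbJ[OF 3(2)] c2p by (intro mult_left_mono) auto
        then show ?thesis using 3 pK unfolding LHS_def RHS_def by (simp add: algebra_simps)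
      next
        case 4
        then show ?thesis using c2p M unfolding LHS_def RHS_def by simp
      qed
    qed
    have "integral\<^sup>L lborel LHS \<le> integral\<^sup>L lborel RHS"
    proof (rule integral_mono)
      show "integrable lborel LHS" unfolding LHS_def using ia' ib' by simp
      show "integrable lborel RHS" unfolding RHS_def using ih' gK gI gJ by simp
    qed (rule pw)
    also have "integral\<^sup>L lborel RHS = c1 * integral\<^sup>L lborel (\<lambda>p. indicator I p * h p) + c2 * M * ((1+t)*(B'-B))
           + (c + M) * (c1 * (t*B) - c2 * (t*B'))"
      unfolding RHS_def using ih' gK gI gJ by (simp add: integral_mult_right_zero mI mJ mK)
    also have "\<dots> = c1 * integral\<^sup>L lborel (\<lambda>p. indicator I p * h p) + c2 * M * ((1+t)*(B'-B))"
      using c1I c2J by simp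
    also have "c2 * M * ((1+t)*(B'-B)) \<le> M * ((1+t)/t) * \<bar>1 - B'/B\<bar>"
    proof -
      have "c2 * ((1+t)*(B'-B)) = ((1+t)/t) * ((B' - B)/B')" unfolding c2_def using t B' by (simp add: field_simps)
      also have "\<dots> \<le> ((1+t)/t) * \<bar>1 - B'/B\<bar>"
      proof (rule mult_left_mono)
        have "(B' - B)/B' \<le> (B' - B)/B" using True B B' by (intro divide_left_mono) auto
        also have "\<dots> = \<bar>1 - B'/B\<bar>" using True B by (simp add: field_simps abs_if)
        finally show "(B' - B)/B' \<le> \<bar>1 - B'/B\<bar>" .
      qed (use t in simp)
      finally have "c2 * ((1+t)*(B'-B)) \<le> ((1+t)/t) * \<bar>1 - B'/B\<bar>" .
      from mult_left_mono[OF this M] show ?thesis by (simp add: mult_ac)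
    qed
    finally show ?thesis using iLHS unfolding c1_def c2_def I_def J_def by simp
  next
    case False
    define K where "K = {(1+t)*B'<..(1+t)*B}"
    define RHS where "RHS = (\<lambda>p. c1 * (indicator I p * h p) + c1 * M * indicator K p
          + c * (c1 * indicator I p - c2 * indicator J p))"
    have gK: "integrable lborel (indicator K :: real \<Rightarrow> real)" unfolding K_def by (rule intg_Ioc)
    have iK: "integral\<^sup>L lborel (indicator K :: real \<Rightarrow> real) = (1+t)*(B-B')"
    proof -
      have "(1+t)*B' \<le> (1+t)*B" using False t by (intro mult_left_mono) auto
      then show ?thesis unfolding K_def by (simp add: int_Ioc algebra_simps)
    qed
    then have mK: "measure lborel K = (1+t)*(B-B')" by simp
    have pw: "LHS p \<le> RHS p" for p
    proof -
      consider "p \<in> I" "p \<in> J" | "p \<in> I" "p \<notin> J" | "p \<notin> I" "p \<in> J" | "p \<notin> I" "p \<notin> J" by blast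
      then show ?thesis
      proof cases
        case 1
        have "c1 * (b p - c) \<le> c2 * (b p - c)"
          using hbJ[OF 1(2)] False B B' t unfolding c1_def c2_def
          by (intro mult_right_mono) (auto simp: frac_le)
        moreover have "c1 * (a p - b p) \<le> c1 * h p"
          using abh 1 c1p unfolding I_def J_def by (intro mult_left_mono) auto
        moreover have "0 \<le> c1 * M * indicator K p" using c1p M by simp
        ultimately show ?thesis using 1 unfolding LHS_def RHS_def
          by (simp add: algebra_simps)
      next
        case 2
        have pK: "p \<in> K" using 2 False t B' unfolding K_def I_def J_def by auto
        have "c1 * a p \<le> c1 * (c + M)" using haI[OF 2(1)] c1p by (intro mult_left_mono) auto
        moreover have "0 \<le> c1 * h p" using c1p h0[of p] by simp
        ultimately show ?thesis using 2 pK unfolding LHS_def RHS_def by (simp add: algebra_simps)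
      next
        case 3
        have "c2 * c \<le> c2 * b p" using hbJ[OF 3(2)] c2p by (intro mult_left_mono) auto
        moreover have "0 \<le> c1 * M * indicator K p" using c1p M by simp
        ultimately show ?thesis using 3 unfolding LHS_def RHS_def by (simp add: algebra_simps)
      next
        case 4
        then show ?thesis using c1p M unfolding LHS_def RHS_def by simp
      qed
    qed
    have "integral\<^sup>L lborel LHS \<le> integral\<^sup>L lborel RHS"
    proof (rule integral_mono)
      show "integrable lborel LHS" unfolding LHS_def using ia' ib' by simp
      show "integrable lborel RHS" unfolding RHS_def using ih' gK gI gJ by simp
    qed (rule pw)
    also have "integral\<^sup>L lborel RHS = c1 * integral\<^sup>L lborel (\<lambda>p. indicator I p * h p) + c1 * M * ((1+t)*(B-B'))
           + c * (c1 * (t*B) - c2 * (t*B'))"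
      unfolding RHS_def using ih' gK gI gJ by (simp add: integral_mult_right_zero mI mJ mK)
    also have "\<dots> = c1 * integral\<^sup>L lborel (\<lambda>p. indicator I p * h p) + c1 * M * ((1+t)*(B-B'))"
      using c1I c2J by simp
    also have "c1 * M * ((1+t)*(B-B')) = M * ((1+t)/t) * \<bar>1 - B'/B\<bar>"
      unfolding c1_def using t B False by (simp add: field_simps abs_if)
    finally show ?thesis using iLHS unfolding c1_def c2_def I_def J_def by simp
  qed
qed



lemma goodF_nonneg:
  assumes "goodF F D" shows "0 \<le> D P Q"
proof -
  have "((\<lambda>_. 0), (\<lambda>_. 0)) \<in> F" "\<forall>p\<in>F. Lf (fst p) (snd p) P Q \<le> D P Q"
    using assms unfolding goodF_def by auto
  then have "Lf (\<lambda>_. 0) (\<lambda>_. 0) P Q \<le> D P Q" by force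
  then show ?thesis by (simp add: Lf_def)
qed

lemma goodF_SUP:
  assumes g: "goodF F D"
  shows "D P Q = (SUP q\<in>F. Lf (fst q) (snd q) P Q)"
proof (rule antisym)
  have ne: "F \<noteq> {}" using g unfolding goodF_def by auto
  have le: "\<And>q. q \<in> F \<Longrightarrow> Lf (fst q) (snd q) P Q \<le> D P Q" using g unfolding goodF_def by auto
  have bdd: "bdd_above ((\<lambda>q. Lf (fst q) (snd q) P Q) ` F)" using le by (intro bdd_aboveI2)
  show "(SUP q\<in>F. Lf (fst q) (snd q) P Q) \<le> D P Q" using ne le by (rule cSUP_least)
  show "D P Q \<le> (SUP q\<in>F. Lf (fst q) (snd q) P Q)"
  proof (rule field_le_epsilon)
    fix e :: real assume e: "0 < e"
    then obtain q where q: "q \<in> F" "D P Q - e < Lf (fst q) (snd q) P Q"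
      using g unfolding goodF_def by blast
    have "Lf (fst q) (snd q) P Q \<le> (SUP q\<in>F. Lf (fst q) (snd q) P Q)" by (rule cSUP_upper[OF q(1) bdd])
    then show "D P Q \<le> (SUP q\<in>F. Lf (fst q) (snd q) P Q) + e" using q(2) by simp
  qed
qed



lemma pmf_piece_intg:
  fixes l u :: real
  assumes "set_borel_measurable borel {l..u} (\<lambda>p. pmf (R p) \<omega>)"
  shows "integrable lborel (\<lambda>p. indicator {l..u} p * pmf (R p) \<omega>)"
proof (rule Bochner_Integration.integrable_bound[OF intg_Icc[of l u]])
  show "(\<lambda>p. indicator {l..u} p * pmf (R p) \<omega>) \<in> borel_measurable lborel"
    using assms unfolding set_borel_measurable_def by simp
  show "AE x in lborel. norm (indicator {l..u} x * pmf (R x) \<omega>) \<le> norm (indicator {l..u} x :: real)"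
    by (rule AE_I2) (auto simp: indicator_def pmf_le_1)
qed

lemma per_i:
  fixes F and D :: "'a::finite pmf \<Rightarrow> 'a pmf \<Rightarrow> real"
    and t B B' M :: real
    and Pf :: "real \<Rightarrow> 'a pmf" and Qf :: "real \<Rightarrow> 'a pmf"
    and P :: "'a pmf" and Q :: "'a pmf"
  assumes g: "goodF F D"
    and t: "t > 0" and B: "B > 0" and B': "B' > 0"
    and Pf_meas: "\<And>\<omega>. set_borel_measurable borel {B..(1+t)*B} (\<lambda>p. pmf (Pf p) \<omega>)"
    and Qf_meas: "\<And>\<omega>. set_borel_measurable borel {B'..(1+t)*B'} (\<lambda>p. pmf (Qf p) \<omega>)"
    and P_mix: "\<And>\<omega>. pmf P \<omega> = (1 / (t*B)) * (LINT p:{B..(1+t)*B}|lborel. pmf (Pf p) \<omega>)"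
    and Q_mix: "\<And>\<omega>. pmf Q \<omega> = (1 / (t * B')) * (LINT p:{B'..(1+t)*B'}|lborel. pmf (Qf p) \<omega>)"
    and M: "M \<ge> 0"
    and M_bound: "\<And>p q. p \<in> {B..(1+t)*B} \<Longrightarrow> q \<in> {B'..(1+t)*B'} \<Longrightarrow> D (Pf p) (Qf q) \<le> M"
  shows "integrable lborel (\<lambda>p. indicator {B..(1+t)*B} p * (if p \<in> {B'..(1+t)*B'} then D (Pf p) (Qf p) else 0))"
    and "D P Q \<le> (1/(t*B)) * integral\<^sup>L lborel (\<lambda>p. indicator {B..(1+t)*B} p * (if p \<in> {B'..(1+t)*B'} then D (Pf p) (Qf p) else 0))
            + M * ((1+t)/t) * \<bar>1 - B'/B\<bar>"
proof -
  define I where "I = {B..(1+t)*B}"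
  define J where "J = {B'..(1+t)*B'}"
  define h where "h = (\<lambda>p. if p \<in> J then D (Pf p) (Qf p) else 0)"
  have h0: "0 \<le> h p" for p unfolding h_def using goodF_nonneg[OF g] by auto
  have iP: "integrable lborel (\<lambda>p. indicator I p * pmf (Pf p) x)" for x
    unfolding I_def by (rule pmf_piece_intg[OF Pf_meas])
  have iQ: "integrable lborel (\<lambda>p. indicator J p * pmf (Qf p) x)" for x
    unfolding J_def by (rule pmf_piece_intg[OF Qf_meas])
  have mP: "(\<lambda>p. indicator I p * pmf (Pf p) x) \<in> borel_measurable lborel" for x
    using iP by auto
  have mQ: "(\<lambda>p. indicator J p * pmf (Qf p) x) \<in> borel_measurable lborel" for x
    using iQ by auto
  have ne: "F \<noteq> {}" using g unfolding goodF_def by auto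
  have cF: "countable F" using g unfolding goodF_def by auto
  define S where "S = (\<lambda>q p. (\<Sum>x\<in>UNIV. fst q x * (indicator I p * pmf (Pf p) x)) * indicator J p
                         - (\<Sum>y\<in>UNIV. snd q y * (indicator J p * pmf (Qf p) y)) * indicator I p)"
  have S_eq: "S q p = indicator I p * indicator J p * Lf (fst q) (snd q) (Pf p) (Qf p)" for q p
    unfolding S_def Lf_def by (simp add: indicator_def)
  have hSUP: "indicator I p * h p = (SUP q\<in>F. S q p)" for p
  proof (cases "p \<in> I \<and> p \<in> J")
    case True
    then show ?thesis unfolding S_eq h_def using goodF_SUP[OF g] by simp
  next
    case False
    then have "S q p = 0" for q unfolding S_eq by auto
    then show ?thesis using False ne unfolding h_def by (auto simp: cSUP_const)
  qed
  have mI: "(indicator I :: real \<Rightarrow> real) \<in> borel_measurable lborel"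
    unfolding I_def by (intro borel_measurable_indicator) simp
  have mJ: "(indicator J :: real \<Rightarrow> real) \<in> borel_measurable lborel"
    unfolding J_def by (intro borel_measurable_indicator) simp
  have mS: "S q \<in> borel_measurable lborel" for q
    unfolding S_def
    by (intro borel_measurable_diff borel_measurable_times borel_measurable_sum mP mQ mI mJ borel_measurable_const)
  have mh: "(\<lambda>p. indicator I p * h p) \<in> borel_measurable lborel"
  proof -
    have "(\<lambda>p. SUP q\<in>F. S q p) \<in> borel_measurable lborel"
    proof (rule borel_measurable_cSUP[OF cF mS])
      fix p
      show "bdd_above ((\<lambda>q. S q p) ` F)"
      proof (rule bdd_aboveI2)
        fix q assume "q \<in> F"
        then have "Lf (fst q) (snd q) (Pf p) (Qf p) \<le> D (Pf p) (Qf p)" using g unfolding goodF_def by auto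
        then show "S q p \<le> indicator I p * indicator J p * D (Pf p) (Qf p)"
          unfolding S_eq by (auto simp: indicator_def)
      qed
    qed
    then show ?thesis using hSUP by simp
  qed
  have ih: "integrable lborel (\<lambda>p. indicator I p * h p)"
  proof (rule Bochner_Integration.integrable_bound[OF _ mh])
    show "integrable lborel (\<lambda>p. M * indicator I p)" unfolding I_def using intg_Icc by simp
    show "AE x in lborel. norm (indicator I x * h x) \<le> norm (M * indicator I x)"
    proof (rule AE_I2)
      fix x
      show "norm (indicator I x * h x) \<le> norm (M * indicator I x)"
        using M_bound[of x x] h0[of x] M unfolding h_def I_def J_def by (auto simp: indicator_def)
    qed
  qed
  then show "integrable lborel (\<lambda>p. indicator {B..(1+t)*B} p * (if p \<in> {B'..(1+t)*B'} then D (Pf p) (Qf p) else 0))"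
    unfolding h_def I_def J_def .
  define R where "R = (1/(t*B)) * integral\<^sup>L lborel (\<lambda>p. indicator I p * h p) + M * ((1+t)/t) * \<bar>1 - B'/B\<bar>"
  have "D P Q \<le> R"
  proof (rule field_le_epsilon)
    fix e :: real assume e: "0 < e"
    then obtain q where q: "q \<in> F" "D P Q - e < Lf (fst q) (snd q) P Q"
      using g unfolding goodF_def by blast
    define f where "f = fst q"
    define gg where "gg = snd q"
    define a where "a = (\<lambda>p. \<Sum>x\<in>UNIV. f x * pmf (Pf p) x)"
    define b where "b = (\<lambda>p. \<Sum>y\<in>UNIV. gg y * pmf (Qf p) y)"
    have Lab: "Lf f gg P' Q' = (\<Sum>x\<in>UNIV. f x * pmf P' x) - (\<Sum>y\<in>UNIV. gg y * pmf Q' y)" for P' Q'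
      by (simp add: Lf_def)
    have LfD: "Lf f gg P' Q' \<le> D P' Q'" for P' Q' using g q(1) unfolding goodF_def f_def gg_def by auto
    have eqa: "(\<lambda>p. indicator I p * a p) = (\<lambda>p. \<Sum>x\<in>UNIV. f x * (indicator I p * pmf (Pf p) x))"
      unfolding a_def by (simp add: sum_distrib_left mult_ac)
    have eqb: "(\<lambda>p. indicator J p * b p) = (\<lambda>p. \<Sum>y\<in>UNIV. gg y * (indicator J p * pmf (Qf p) y))"
      unfolding b_def by (simp add: sum_distrib_left mult_ac)
    have ia: "integrable lborel (\<lambda>p. indicator I p * a p)" unfolding eqa using iP by simp
    have ib: "integrable lborel (\<lambda>p. indicator J p * b p)" unfolding eqb using iQ by simp
    have inta: "integral\<^sup>L lborel (\<lambda>p. indicator I p * a p) = (\<Sum>x\<in>UNIV. f x * integral\<^sup>L lborel (\<lambda>p. indicator I p * pmf (Pf p) x))"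
      unfolding eqa using iP by (simp add: integral_sum integral_mult_right_zero)
    have intb: "integral\<^sup>L lborel (\<lambda>p. indicator J p * b p) = (\<Sum>y\<in>UNIV. gg y * integral\<^sup>L lborel (\<lambda>p. indicator J p * pmf (Qf p) y))"
      unfolding eqb using iQ by (simp add: integral_sum integral_mult_right_zero)
    have PP: "pmf P x = (1/(t*B)) * integral\<^sup>L lborel (\<lambda>p. indicator I p * pmf (Pf p) x)" for x
      using P_mix[of x] unfolding I_def set_lebesgue_integral_def by simp
    have QQ: "pmf Q y = (1/(t*B')) * integral\<^sup>L lborel (\<lambda>p. indicator J p * pmf (Qf p) y)" for y
      using Q_mix[of y] unfolding J_def set_lebesgue_integral_def by simp
    have LPQ: "Lf f gg P Q = (1/(t*B)) * integral\<^sup>L lborel (\<lambda>p. indicator I p * a p)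
                         - (1/(t*B')) * integral\<^sup>L lborel (\<lambda>p. indicator J p * b p)"
      unfolding Lab inta intb PP QQ by (simp add: sum_distrib_left mult_ac)
    have core': "(1/(t*B)) * integral\<^sup>L lborel (\<lambda>p. indicator I p * a p)
       - (1/(t*B')) * integral\<^sup>L lborel (\<lambda>p. indicator J p * b p) \<le> R"
      unfolding R_def I_def J_def
    proof (rule core[OF t B B' M])
      show "integrable lborel (\<lambda>p. indicator {B..(1+t)*B} p * a p)" using ia unfolding I_def .
      show "integrable lborel (\<lambda>p. indicator {B'..(1+t)*B'} p * b p)" using ib unfolding J_def .
      show "integrable lborel (\<lambda>p. indicator {B..(1+t)*B} p * h p)" using ih unfolding I_def .
      fix p q assume "p \<in> {B..(1+t)*B}" "q \<in> {B'..(1+t)*B'}"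
      then show "a p - b q \<le> M" using LfD[of "Pf p" "Qf q"] M_bound[of p q]
        unfolding a_def b_def Lab by simp
    next
      fix p assume "p \<in> {B..(1+t)*B}" "p \<in> {B'..(1+t)*B'}"
      then show "a p - b p \<le> h p" using LfD[of "Pf p" "Qf p"]
        unfolding a_def b_def Lab h_def J_def by simp
    qed (rule h0)
    show "D P Q \<le> R + e" using q(2) LPQ core' unfolding f_def gg_def by simp
  qed
  then show "D P Q \<le> (1/(t*B)) * integral\<^sup>L lborel (\<lambda>p. indicator {B..(1+t)*B} p * (if p \<in> {B'..(1+t)*B'} then D (Pf p) (Qf p) else 0))
            + M * ((1+t)/t) * \<bar>1 - B'/B\<bar>"
    unfolding R_def h_def I_def J_def .
qed



theorem lemma3:
  fixes D :: "'a::finite pmf \<Rightarrow> 'a pmf \<Rightarrow> real"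
    and \<rho> :: "'a \<Rightarrow> 'a \<Rightarrow> real"
    and t B M :: real and n :: nat
    and Bs :: "nat \<Rightarrow> real"
    and Pf :: "real \<Rightarrow> 'a pmf" and Qf :: "nat \<Rightarrow> real \<Rightarrow> 'a pmf"
    and P :: "'a pmf" and Q :: "nat \<Rightarrow> 'a pmf"
  assumes D_choice: "D = TV \<or> (is_metric \<rho> \<and> D = EM \<rho>)"
    and n_pos: "n > 0"
    and t_pos: "t > 0" and B_pos: "B > 0"
    and Bs_pos: "\<And>i. i \<in> {1..n} \<Longrightarrow> Bs i > 0"
    and Pf_meas: "\<And>\<omega>. set_borel_measurable borel {B..(1+t)*B} (\<lambda>p. pmf (Pf p) \<omega>)"
    and Qf_meas: "\<And>i \<omega>. i \<in> {1..n} \<Longrightarrow>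
                    set_borel_measurable borel {Bs i..(1+t)*Bs i} (\<lambda>p. pmf (Qf i p) \<omega>)"
    and P_mix: "\<And>\<omega>. pmf P \<omega> = (1 / (t*B)) * (LINT p:{B..(1+t)*B}|lborel. pmf (Pf p) \<omega>)"
    and Q_mix: "\<And>i \<omega>. i \<in> {1..n} \<Longrightarrow>
                  pmf (Q i) \<omega> = (1 / (t * Bs i)) * (LINT p:{Bs i..(1+t)*Bs i}|lborel. pmf (Qf i p) \<omega>)"
    and M_nonneg: "M \<ge> 0"
    and M_bound: "\<And>i p q. i \<in> {1..n} \<Longrightarrow> p \<in> {B..(1+t)*B} \<Longrightarrow> q \<in> {Bs i..(1+t)*Bs i} \<Longrightarrow>
                    D (Pf p) (Qf i q) \<le> M"
  shows "(1 / real n) * (\<Sum>i=1..n. D P (Q i))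
    \<le> (1 / (t*B)) * (LINT p:{B..(1+t)*B}|lborel.
          (1 / real n) * (\<Sum>i=1..n. (if p \<in> {Bs i..(1+t)*Bs i} then D (Pf p) (Qf i p) else 0)))
      + (M / real n) * ((1+t)/t) * (\<Sum>i=1..n. \<bar>1 - Bs i / B\<bar>)"
proof -
  obtain F where g: "goodF F D"
  proof (cases "D = TV")
    case True
    then show ?thesis using goodF_TV that by blast
  next
    case False
    then have "is_metric \<rho>" "D = EM \<rho>" using D_choice by auto
    then show ?thesis using goodF_EM[of \<rho>] that unfolding is_metric_def by blast
  qed
  define I where "I = {B..(1+t)*B}"
  define H where "H = (\<lambda>i p. indicator I p * (if p \<in> {Bs i..(1+t)*Bs i} then D (Pf p) (Qf i p) else 0))"
  have iH: "integrable lborel (H i)" and bH: "D P (Q i) \<le> (1/(t*B)) * integral\<^sup>L lborel (H i) + M * ((1+t)/t) * \<bar>1 - Bs i/B\<bar>"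
    if i: "i \<in> {1..n}" for i
  proof -
    have r: "integrable lborel (\<lambda>p. indicator {B..(1+t)*B} p * (if p \<in> {Bs i..(1+t)*Bs i} then D (Pf p) (Qf i p) else 0))"
         "D P (Q i) \<le> (1/(t*B)) * integral\<^sup>L lborel (\<lambda>p. indicator {B..(1+t)*B} p * (if p \<in> {Bs i..(1+t)*Bs i} then D (Pf p) (Qf i p) else 0))
            + M * ((1+t)/t) * \<bar>1 - Bs i/B\<bar>"
      using per_i[OF g t_pos B_pos Bs_pos[OF i] Pf_meas Qf_meas[OF i] P_mix Q_mix[OF i] M_nonneg M_bound[OF i]]
      by blast+
    show "integrable lborel (H i)" using r(1) unfolding H_def I_def .
    show "D P (Q i) \<le> (1/(t*B)) * integral\<^sup>L lborel (H i) + M * ((1+t)/t) * \<bar>1 - Bs i/B\<bar>"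
      using r(2) unfolding H_def I_def .
  qed
  have intEq: "(LINT p:{B..(1+t)*B}|lborel.
          (1 / real n) * (\<Sum>i=1..n. (if p \<in> {Bs i..(1+t)*Bs i} then D (Pf p) (Qf i p) else 0)))
       = (1 / real n) * (\<Sum>i=1..n. integral\<^sup>L lborel (H i))"
  proof -
    have "(LINT p:{B..(1+t)*B}|lborel.
          (1 / real n) * (\<Sum>i=1..n. (if p \<in> {Bs i..(1+t)*Bs i} then D (Pf p) (Qf i p) else 0)))
        = integral\<^sup>L lborel (\<lambda>p. (1 / real n) * (\<Sum>i=1..n. H i p))"
      unfolding set_lebesgue_integral_def H_def I_def
      by (intro arg_cong[where f="integral\<^sup>L lborel"] ext) (simp only: real_scaleR_def sum_distrib_left mult_ac)
    also have "\<dots> = (1 / real n) * (\<Sum>i=1..n. integral\<^sup>L lborel (H i))"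
      using iH by (simp add: integral_mult_right_zero integral_sum)
    finally show ?thesis .
  qed
  have "(\<Sum>i=1..n. D P (Q i)) \<le> (\<Sum>i=1..n. (1/(t*B)) * integral\<^sup>L lborel (H i) + M * ((1+t)/t) * \<bar>1 - Bs i/B\<bar>)"
    by (rule sum_mono) (rule bH)
  also have "\<dots> = (1/(t*B)) * (\<Sum>i=1..n. integral\<^sup>L lborel (H i)) + M * ((1+t)/t) * (\<Sum>i=1..n. \<bar>1 - Bs i/B\<bar>)"
    by (simp add: sum.distrib sum_distrib_left)
  finally have "(1 / real n) * (\<Sum>i=1..n. D P (Q i)) \<le> (1 / real n) * ((1/(t*B)) * (\<Sum>i=1..n. integral\<^sup>L lborel (H i)) + M * ((1+t)/t) * (\<Sum>i=1..n. \<bar>1 - Bs i/B\<bar>))"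
    using n_pos by (intro mult_left_mono) auto
  also have "\<dots> = (1 / (t*B)) * ((1 / real n) * (\<Sum>i=1..n. integral\<^sup>L lborel (H i))) + (M / real n) * ((1+t)/t) * (\<Sum>i=1..n. \<bar>1 - Bs i / B\<bar>)"
    using n_pos t_pos by (simp add: field_simps)
  finally show ?thesis unfolding intEq .
qed

end
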